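(* Let $Y$ be a Young diagram with row lengths $a_1\ge\cdots\ge a_m\ge0$ and let $Q\subseteq C\times S$. Then there exists a 2-cover $P$ of $H(Y)$ with $P\cap(C\times S)=Q$ and $$\tau^{(2)}(H(Y))\le |P|=|Q|+\sum_{i=1}^m \nu(a_i,Q).$$
   Context: $H(Y)$ is the hypergraph with vertex sides $R=\{r_1,\dots,r_m\}$, $C=\{c_1,\dots,c_{a_1}\}$, $S=\{s_1,\dots,s_{a_1}\}$ and edges $\{r_i,c_j,s_k\}$ for $1\le i\le m$, $1\le j,k\le a_i$. For disjoint sets $A,B$, $A\times B$ denotes the set of pairs $\{a,b\}$, $a\in A$, $b\in B$. A 2-cover of $H(Y)$ is a set of pairs of vertices such that every edge contains some pair of the set; $\tau^{(2)}(H(Y))$ is the minimum size of a 2-cover. $\nu(\ell,Q)$ is the matching number of the bipartite graph with sides $\{c_1,\dots,c_\ell\}$, $\{s_1,\dots,s_\ell\}$ and edges $\{c_js_k:1\le j,k\le\ell\}\setminus Q$. *)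

theory Defs
  imports Main
begin

text \<open>Vertices of H(Y): r_i, c_j, s_k (indices start at 1).\<close>
datatype vtx = Rv nat | Cv nat | Sv nat

definition Rset :: "nat \<Rightarrow> vtx set" where "Rset n = Rv ` {1..n}"
definition Cset :: "nat \<Rightarrow> vtx set" where "Cset n = Cv ` {1..n}"
definition Sset :: "nat \<Rightarrow> vtx set" where "Sset n = Sv ` {1..n}"

text \<open>A \<times> B for disjoint vertex sets: the set of unordered pairs {a,b}.\<close>
definition pairs :: "vtx set \<Rightarrow> vtx set \<Rightarrow> vtx set set" where
  "pairs A B = {{x, y} | x y. x \<in> A \<and> y \<in> B}"

definition first_row :: "nat \<Rightarrow> (nat \<Rightarrow> nat) \<Rightarrow> nat" where
  "first_row m a = (if m = 0 then 0 else a 1)"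

definition HY_vertices :: "nat \<Rightarrow> (nat \<Rightarrow> nat) \<Rightarrow> vtx set" where
  "HY_vertices m a = Rset m \<union> Cset (first_row m a) \<union> Sset (first_row m a)"

definition HY_edges :: "nat \<Rightarrow> (nat \<Rightarrow> nat) \<Rightarrow> vtx set set" where
  "HY_edges m a = {{Rv i, Cv j, Sv k} | i j k.
      1 \<le> i \<and> i \<le> m \<and> 1 \<le> j \<and> j \<le> a i \<and> 1 \<le> k \<and> k \<le> a i}"

definition is_2cover :: "'v set \<Rightarrow> 'v set set \<Rightarrow> 'v set set \<Rightarrow> bool" where
  "is_2cover V E P \<longleftrightarrow> (\<forall>p\<in>P. p \<subseteq> V \<and> card p = 2) \<and> (\<forall>e\<in>E. \<exists>p\<in>P. p \<subseteq> e)"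

definition tau2 :: "'v set \<Rightarrow> 'v set set \<Rightarrow> nat" where
  "tau2 V E = Min {card P | P. is_2cover V E P}"

definition nu :: "nat \<Rightarrow> vtx set set \<Rightarrow> nat" where
  "nu l Q = Max {card M | M. M \<subseteq> pairs (Cset l) (Sset l) - Q \<and> pairwise disjnt M}"

end

theory Submission
  imports Defs
begin

lemma hall:
  fixes A :: "'a set" and N :: "'a \<Rightarrow> 'b set"
  assumes "finite A" "\<forall>a\<in>A. finite (N a)" "\<forall>S\<subseteq>A. card S \<le> card (\<Union>(N ` S))"
  shows "\<exists>f. inj_on f A \<and> (\<forall>a\<in>A. f a \<in> N a)"
  using assms
proof (induction "card A" arbitrary: A N rule: less_induct)
  case less
  show ?case
  proof (cases "A = {}")
    case True then show ?thesis by auto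
  next
    case False
    show ?thesis
    proof (cases "\<exists>S. S \<subseteq> A \<and> S \<noteq> {} \<and> S \<noteq> A \<and> card (\<Union>(N ` S)) \<le> card S")
      case True
      then obtain S where S: "S \<subseteq> A" "S \<noteq> {}" "S \<noteq> A" "card (\<Union>(N ` S)) \<le> card S" by blast
      have fS: "finite S" using S(1) less.prems(1) finite_subset by blast
      have cS: "card S < card A" using S less.prems(1) psubset_card_mono by blast
      obtain g where g: "inj_on g S" "\<forall>a\<in>S. g a \<in> N a"
        using less.hyps[OF cS fS, of N] less.prems S(1) by (meson subset_trans subsetD)
      define NS where "NS = \<Union>(N ` S)"
      have fNS: "finite NS" unfolding NS_def using fS S(1) less.prems(2) by auto
      define A2 where "A2 = A - S"
      define N2 where "N2 = (\<lambda>x. N x - NS)"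
      have fA2: "finite A2" using less.prems(1) A2_def by auto
      have cA2: "card A2 < card A" unfolding A2_def using S less.prems(1)
        by (intro psubset_card_mono) auto
      have hall2: "\<forall>T\<subseteq>A2. card T \<le> card (\<Union>(N2 ` T))"
      proof (intro allI impI)
        fix T assume T: "T \<subseteq> A2"
        have fT: "finite T" using T fA2 finite_subset by blast
        have fU: "finite (\<Union>(N ` (T \<union> S)))" using fT fS T S(1) less.prems(2) A2_def by auto
        have "T \<union> S \<subseteq> A" using T S(1) A2_def by auto
        then have c1: "card (T \<union> S) \<le> card (\<Union>(N ` (T \<union> S)))" using less.prems(3) by blast
        moreover have c2: "card (T \<union> S) = card T + card S"
          using card_Un_disjoint[OF fT fS] T A2_def by auto
        moreover have "\<Union>(N2 ` T) \<supseteq> \<Union>(N ` (T \<union> S)) - NS" by (auto simp: N2_def NS_def)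
        moreover have "card (\<Union>(N ` (T \<union> S)) - NS) = card (\<Union>(N ` (T \<union> S))) - card NS"
          by (rule card_Diff_subset) (use fNS in \<open>auto simp: NS_def\<close>)
        moreover have "finite (\<Union>(N2 ` T))" using fT T A2_def less.prems(2) N2_def by auto
        ultimately have c3: "card (\<Union>(N ` (T \<union> S))) - card NS \<le> card (\<Union>(N2 ` T))"
          by (metis card_mono)
        have "card T + card S \<le> card (\<Union>(N ` (T \<union> S)))" using c1 c2 by simp
        then show "card T \<le> card (\<Union>(N2 ` T))" using S(4) c3 unfolding NS_def[symmetric] by linarith
      qed
      obtain h where h: "inj_on h A2" "\<forall>a\<in>A2. h a \<in> N2 a"
        using less.hyps[OF cA2 fA2, of N2] hall2 less.prems(2) A2_def N2_def by auto
      define f where "f = (\<lambda>x. if x \<in> S then g x else h x)"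
      have gNS: "g x \<in> NS" if "x \<in> S" for x using g(2) that NS_def by blast
      have hNS: "h x \<notin> NS" if "x \<in> A2" for x using h(2) that N2_def by blast
      have "inj_on f A"
      proof (rule inj_onI)
        fix x y assume xy: "x \<in> A" "y \<in> A" "f x = f y"
        show "x = y"
        proof (cases "x \<in> S"; cases "y \<in> S")
          assume "x \<in> S" "y \<in> S" then show ?thesis using xy g(1) f_def by (simp add: inj_on_def)
        next
          assume "x \<in> S" "y \<notin> S" then show ?thesis using xy f_def gNS hNS A2_def by force
        next
          assume "x \<notin> S" "y \<in> S" then show ?thesis using xy f_def gNS hNS A2_def by force
        next
          assume "x \<notin> S" "y \<notin> S" then show ?thesis using xy h(1) f_def A2_def by (simp add: inj_on_def)
        qed
      qed
      moreover have "\<forall>a\<in>A. f a \<in> N a" using g h A2_def N2_def f_def by auto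
      ultimately show ?thesis by blast
    next
      case nS: False
      obtain a where a: "a \<in> A" using False by blast
      have "{a} \<subseteq> A" using a by simp
      then have "card {a} \<le> card (\<Union>(N ` {a}))" using less.prems(3) by blast
      then have "card {a} \<le> card (N a)" by simp
      then obtain b where b: "b \<in> N a" by fastforce
      define A1 where "A1 = A - {a}"
      define N1 where "N1 = (\<lambda>x. N x - {b})"
      have fA1: "finite A1" using less.prems(1) A1_def by auto
      have cA1: "card A1 < card A" unfolding A1_def using a less.prems(1)
        by (metis card_Diff1_less)
      have hall1: "\<forall>T\<subseteq>A1. card T \<le> card (\<Union>(N1 ` T))"
      proof (intro allI impI)
        fix T assume T: "T \<subseteq> A1"
        show "card T \<le> card (\<Union>(N1 ` T))"
        proof (cases "T = {}")
          case True then show ?thesis by simp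
        next
          case False
          have "T \<noteq> A" using T A1_def a by auto
          moreover have "T \<subseteq> A" using T A1_def by auto
          ultimately have "card T < card (\<Union>(N ` T))" using nS False by (meson not_le)
          moreover have "\<Union>(N1 ` T) = \<Union>(N ` T) - {b}" by (auto simp: N1_def)
          ultimately show ?thesis by (simp add: card_Diff_singleton_if del: Diff_iff) linarith
        qed
      qed
      obtain g where g: "inj_on g A1" "\<forall>a\<in>A1. g a \<in> N1 a"
        using less.hyps[OF cA1 fA1, of N1] hall1 less.prems(2) A1_def N1_def by auto
      define f where "f = g(a := b)"
      have gb: "g x \<noteq> b" if "x \<in> A1" for x using g(2) that N1_def by blast
      have "A = insert a A1" using a A1_def by auto
      moreover have "inj_on f A1" using g(1) unfolding f_def A1_def by (simp add: inj_on_def)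
      moreover have "f a \<notin> f ` A1" using gb unfolding f_def A1_def by auto
      moreover have "a \<notin> A1" using A1_def by auto
      ultimately have "inj_on f A" by simp
      moreover have "\<forall>x\<in>A. f x \<in> N x" using g b unfolding f_def A1_def N1_def by auto
      ultimately show ?thesis by blast
    qed
  qed
qed

lemma konig:
  fixes A :: "'a set" and N :: "'a \<Rightarrow> 'b set"
  assumes fA: "finite A" and fN: "\<forall>a\<in>A. finite (N a)"
  shows "\<exists>A' f X Y. A' \<subseteq> A \<and> inj_on f A' \<and> (\<forall>a\<in>A'. f a \<in> N a) \<and> X \<subseteq> A
     \<and> (\<forall>a\<in>A-X. N a \<subseteq> Y) \<and> Y \<subseteq> \<Union>(N ` A) \<and> card X + card Y \<le> card A'"
proof -
  define D where "D S = int (card S) - int (card (\<Union>(N ` S)))" for S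
  define d where "d = Max (D ` Pow A)"
  have fin: "finite (D ` Pow A)" using fA by simp
  have "d \<in> D ` Pow A" unfolding d_def using fin by (intro Max_in) auto
  then obtain S0 where S0: "S0 \<subseteq> A" "D S0 = d" by auto
  have dmax: "D S \<le> d" if "S \<subseteq> A" for S unfolding d_def using fin that by (intro Max_ge) auto
  have "D {} = 0" unfolding D_def by simp
  then have d0: "d \<ge> 0" using dmax[of "{}"] by simp
  define dn where "dn = nat d"
  define N' where "N' a = Inl ` N a \<union> Inr ` {0..<dn}" for a
  have hallc: "\<forall>S\<subseteq>A. card S \<le> card (\<Union>(N' ` S))"
  proof (intro allI impI)
    fix S assume S: "S \<subseteq> A"
    show "card S \<le> card (\<Union>(N' ` S))"
    proof (cases "S = {}")
      case True then show ?thesis by simp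
    next
      case False
      have fS: "finite S" using S fA finite_subset by blast
      have fU: "finite (\<Union>(N ` S))" using fS S fN by auto
      have "\<Union>(N' ` S) = Inl ` \<Union>(N ` S) \<union> Inr ` {0..<dn}" using False by (auto simp: N'_def)
      moreover have "card (Inl ` \<Union>(N ` S) \<union> (Inr ` {0..<dn} :: ('b + nat) set)) = card (\<Union>(N ` S)) + dn"
        by (subst card_Un_disjoint) (use fU in \<open>auto simp: card_image\<close>)
      moreover have "D S \<le> d" using dmax S by simp
      ultimately show ?thesis unfolding D_def dn_def using d0 by simp
    qed
  qed
  have fN': "\<forall>a\<in>A. finite (N' a)" using fN by (auto simp: N'_def)
  obtain f where f: "inj_on f A" "\<forall>a\<in>A. f a \<in> N' a" using hall[OF fA fN' hallc] by blast
  define A' where "A' = {a\<in>A. isl (f a)}"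
  define f' where "f' a = projl (f a)" for a
  have "f ` (A - A') \<subseteq> Inr ` {0..<dn}" using f(2) by (auto simp: A'_def N'_def)
  moreover have "inj_on f (A - A')" using f(1) by (rule inj_on_subset) auto
  ultimately have "card (A - A') \<le> card (Inr ` {0..<dn} :: ('b + nat) set)"
    by (intro card_inj_on_le) auto
  then have cAA: "card (A - A') \<le> dn" by (simp add: card_image)
  have A'A: "A' \<subseteq> A" by (auto simp: A'_def)
  have cA': "card A = card A' + card (A - A')"
  proof -
    have "finite A'" using A'A fA finite_subset by blast
    moreover have "finite (A - A')" using fA by simp
    ultimately have "card (A' \<union> (A - A')) = card A' + card (A - A')" by (rule card_Un_disjoint) auto
    moreover have "A' \<union> (A - A') = A" using A'A by auto
    ultimately show ?thesis by simp
  qed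
  have injf': "inj_on f' A'"
  proof (rule inj_onI)
    fix x y assume "x \<in> A'" "y \<in> A'" "f' x = f' y"
    then have "f x = f y" unfolding A'_def f'_def by (cases "f x"; cases "f y") auto
    then show "x = y" using f(1) \<open>x \<in> A'\<close> \<open>y \<in> A'\<close> A'A by (meson inj_onD subsetD)
  qed
  have f'N: "\<forall>a\<in>A'. f' a \<in> N a" using f(2) by (auto simp: A'_def f'_def N'_def)
  define X where "X = A - S0"
  define Y where "Y = \<Union>(N ` S0)"
  have fS0: "finite S0" using S0 fA finite_subset by blast
  have cX: "card X = card A - card S0" unfolding X_def using S0 fS0 by (simp add: card_Diff_subset)
  have "card S0 \<le> card A" using S0 fA card_mono by blast
  then have "int (card X) = int (card A) - int (card S0)" using cX by simp
  then have "int (card X) + int (card Y) = int (card A) - d" using S0(2) unfolding D_def Y_def by linarith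
  then have "card X + card Y \<le> card A'" using cA' cAA d0 unfolding dn_def by linarith
  moreover have "\<forall>a\<in>A-X. N a \<subseteq> Y" unfolding X_def Y_def using S0 by auto
  moreover have "Y \<subseteq> \<Union>(N ` A)" unfolding Y_def using S0 by auto
  ultimately show ?thesis
    by (intro exI[of _ A'] exI[of _ f'] exI[of _ X] exI[of _ Y]) (use A'A injf' f'N X_def in auto)
qed

lemma pairs_finite: "finite (pairs (Cset l) (Sset l))"
proof -
  have "pairs (Cset l) (Sset l) = (\<lambda>(x,y). {x,y}) ` (Cset l \<times> Sset l)"
    unfolding pairs_def by auto
  then show ?thesis by (simp add: Cset_def Sset_def)
qed

lemma cover_nu:
  "\<exists>V. V \<subseteq> Cset l \<union> Sset l \<and> card V = nu l Q \<and>
     (\<forall>j\<in>{1..l}. \<forall>k\<in>{1..l}. {Cv j, Sv k} \<notin> Q \<longrightarrow> Cv j \<in> V \<or> Sv k \<in> V)"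
proof -
  define N where "N j = {k\<in>{1..l}. {Cv j, Sv k} \<notin> Q}" for j
  obtain A' f X Y where K: "A' \<subseteq> {1..l}" "inj_on f A'" "\<forall>a\<in>A'. f a \<in> N a" "X \<subseteq> {1..l}"
     "\<forall>a\<in>{1..l}-X. N a \<subseteq> Y" "Y \<subseteq> \<Union>(N ` {1..l})" "card X + card Y \<le> card A'"
    using konig[of "{1..l}" N] by (auto simp: N_def)
  have YS: "Y \<subseteq> {1..l}" using K(6) by (auto simp: N_def)
  have fX: "finite X" using K(4) finite_subset by blast
  have fY: "finite Y" using YS finite_subset by blast
  define V where "V = Cv ` X \<union> Sv ` Y"
  have fV: "finite V" using fX fY V_def by simp
  have cardV: "card V = card X + card Y"
    unfolding V_def by (subst card_Un_disjoint) (use fX fY in \<open>auto simp: card_image inj_on_def\<close>)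
  have Vsub: "V \<subseteq> Cset l \<union> Sset l" using K(4) YS by (auto simp: V_def Cset_def Sset_def)
  have cov: "\<forall>j\<in>{1..l}. \<forall>k\<in>{1..l}. {Cv j, Sv k} \<notin> Q \<longrightarrow> Cv j \<in> V \<or> Sv k \<in> V"
  proof (intro ballI impI)
    fix j k assume jk: "j \<in> {1..l}" "k \<in> {1..l}" "{Cv j, Sv k} \<notin> Q"
    show "Cv j \<in> V \<or> Sv k \<in> V"
    proof (cases "j \<in> X")
      case True then show ?thesis by (simp add: V_def)
    next
      case False
      then have "k \<in> Y" using K(5) jk by (auto simp: N_def)
      then show ?thesis by (simp add: V_def)
    qed
  qed
  define Ms where "Ms = {card M | M. M \<subseteq> pairs (Cset l) (Sset l) - Q \<and> pairwise disjnt M}"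
  have finMs: "finite Ms"
  proof -
    have "Ms \<subseteq> {..card (pairs (Cset l) (Sset l))}"
      unfolding Ms_def using pairs_finite by (auto intro!: card_mono)
    then show ?thesis using finite_subset by blast
  qed
  have nu_def': "nu l Q = Max Ms" unfolding nu_def Ms_def by simp
  define M0 where "M0 = (\<lambda>j. {Cv j, Sv (f j)}) ` A'"
  have M0sub: "M0 \<subseteq> pairs (Cset l) (Sset l) - Q"
  proof
    fix e assume "e \<in> M0"
    then obtain j where j: "j \<in> A'" "e = {Cv j, Sv (f j)}" unfolding M0_def by blast
    have "f j \<in> N j" using K(3) j by blast
    then show "e \<in> pairs (Cset l) (Sset l) - Q" using j K(1)
      unfolding pairs_def Cset_def Sset_def N_def by blast
  qed
  have M0disj: "pairwise disjnt M0"
    unfolding pairwise_def disjnt_def M0_def using K(2) by (auto simp: inj_on_def)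
  have "inj_on (\<lambda>j. {Cv j, Sv (f j)}) A'" by (auto simp: inj_on_def doubleton_eq_iff)
  then have "card M0 = card A'" unfolding M0_def by (simp add: card_image)
  then have "card A' \<in> Ms" unfolding Ms_def mem_Collect_eq
    by (intro exI[of _ M0]) (use M0sub M0disj in simp)
  then have lo: "card A' \<le> nu l Q" unfolding nu_def' using finMs by (simp add: Max_ge)
  have "card {} \<in> Ms" unfolding Ms_def mem_Collect_eq
    by (intro exI[of _ "{}"]) (simp add: pairwise_def)
  then have "Max Ms \<in> Ms" using finMs by (intro Max_in) auto
  then obtain M where M: "M \<subseteq> pairs (Cset l) (Sset l) - Q" "pairwise disjnt M" "nu l Q = card M"
    unfolding Ms_def nu_def' by blast
  have hit: "\<forall>e\<in>M. \<exists>x. x \<in> e \<inter> V"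
  proof
    fix e assume "e \<in> M"
    then have e1: "e \<in> pairs (Cset l) (Sset l)" "e \<notin> Q" using M(1) by auto
    then obtain x y where xy: "e = {x,y}" "x \<in> Cset l" "y \<in> Sset l" unfolding pairs_def by blast
    then obtain j k where jk: "x = Cv j" "j \<in> {1..l}" "y = Sv k" "k \<in> {1..l}"
      unfolding Cset_def Sset_def by blast
    have "Cv j \<in> V \<or> Sv k \<in> V" using cov jk e1(2) xy(1) by blast
    then show "\<exists>x. x \<in> e \<inter> V" using xy(1) jk by auto
  qed
  define g where "g e = (SOME x. x \<in> e \<inter> V)" for e
  have g: "g e \<in> e \<inter> V" if "e \<in> M" for e using hit that unfolding g_def by (meson someI_ex)
  have "inj_on g M"
  proof (rule inj_onI)
    fix e1 e2 assume "e1 \<in> M" "e2 \<in> M" "g e1 = g e2"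
    note h = this
    show "e1 = e2"
    proof (rule ccontr)
      assume ne: "e1 \<noteq> e2"
      then have "disjnt e1 e2" using M(2) h(1,2) unfolding pairwise_def by blast
      moreover have "g e1 \<in> e1" "g e1 \<in> e2" using g[OF h(1)] g[OF h(2)] h(3) by auto
      ultimately show False unfolding disjnt_def by blast
    qed
  qed
  moreover have "g ` M \<subseteq> V" using g by blast
  ultimately have "card M \<le> card V" using fV by (intro card_inj_on_le) auto
  then have "card V = nu l Q" using lo cardV K(7) M(3) by linarith
  then show ?thesis using Vsub cov by blast
qed

lemma young_le:
  fixes a :: "nat \<Rightarrow> nat"
  assumes young: "\<forall>i. 1 \<le> i \<and> i < m \<longrightarrow> a (Suc i) \<le> a i"
  shows "1 \<le> i \<Longrightarrow> i \<le> m \<Longrightarrow> a i \<le> a 1"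
proof (induction i)
  case 0 then show ?case by simp
next
  case (Suc i)
  show ?case
  proof (cases "i = 0")
    case True then show ?thesis by simp
  next
    case False
    then have "a (Suc i) \<le> a i" using young Suc.prems by auto
    moreover have "a i \<le> a 1" using Suc False by auto
    ultimately show ?thesis by linarith
  qed
qed

theorem corollary1:
  fixes m :: nat and a :: "nat \<Rightarrow> nat" and Q :: "vtx set set"
  assumes young: "\<forall>i. 1 \<le> i \<and> i < m \<longrightarrow> a (Suc i) \<le> a i"
    and Q: "Q \<subseteq> pairs (Cset (first_row m a)) (Sset (first_row m a))"
  shows "\<exists>P. is_2cover (HY_vertices m a) (HY_edges m a) P
           \<and> P \<inter> pairs (Cset (first_row m a)) (Sset (first_row m a)) = Q
           \<and> tau2 (HY_vertices m a) (HY_edges m a) \<le> card P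
           \<and> card P = card Q + (\<Sum>i=1..m. nu (a i) Q)"
proof -
  define n where "n = first_row m a"
  have an: "a i \<le> n" if "1 \<le> i" "i \<le> m" for i
    using young_le[OF young that] that unfolding n_def first_row_def by simp
  have "\<forall>i. \<exists>V. V \<subseteq> Cset (a i) \<union> Sset (a i) \<and> card V = nu (a i) Q \<and>
     (\<forall>j\<in>{1..a i}. \<forall>k\<in>{1..a i}. {Cv j, Sv k} \<notin> Q \<longrightarrow> Cv j \<in> V \<or> Sv k \<in> V)"
    using cover_nu by blast
  then obtain V where V: "\<And>i. V i \<subseteq> Cset (a i) \<union> Sset (a i)" "\<And>i. card (V i) = nu (a i) Q"
     "\<And>i. \<forall>j\<in>{1..a i}. \<forall>k\<in>{1..a i}. {Cv j, Sv k} \<notin> Q \<longrightarrow> Cv j \<in> V i \<or> Sv k \<in> V i"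
    by metis
  have VnoR: "Rv j \<notin> V i" for i j using V(1)[of i] by (auto simp: Cset_def Sset_def)
  have finV: "finite (V i)" for i
    using V(1)[of i] by (rule finite_subset) (simp add: Cset_def Sset_def)
  define R where "R i = (\<lambda>x. {Rv i, x}) ` V i" for i
  define P where "P = Q \<union> (\<Union>i\<in>{1..m}. R i)"
  have cardR: "card (R i) = nu (a i) Q" for i
  proof -
    have "inj_on (\<lambda>x. {Rv i, x}) (V i)"
      using VnoR by (auto simp: inj_on_def doubleton_eq_iff)
    then show ?thesis unfolding R_def using V(2) by (simp add: card_image)
  qed
  have finR: "finite (R i)" for i using finV by (simp add: R_def)
  have disjR: "R i \<inter> R j = {}" if "i \<noteq> j" for i j
  proof -
    { fix x y assume "x \<in> V i" "y \<in> V j" "{Rv i, x} = {Rv j, y}"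
      then have False using VnoR that by (auto simp: doubleton_eq_iff) }
    then show ?thesis unfolding R_def by blast
  qed
  have cardU: "card (\<Union>i\<in>{1..m}. R i) = (\<Sum>i=1..m. nu (a i) Q)"
    by (subst card_UN_disjoint) (use finR disjR cardR in auto)
  have Qform: "\<exists>j k. q = {Cv j, Sv k} \<and> j \<in> {1..n} \<and> k \<in> {1..n}" if "q \<in> Q" for q
    using Q that unfolding n_def[symmetric] pairs_def Cset_def Sset_def by blast
  have pform: "\<exists>j k. q = {Cv j, Sv k}" if "q \<in> pairs (Cset n) (Sset n)" for q
    using that unfolding pairs_def Cset_def Sset_def by blast
  have Rform: "Rv i \<in> q" if "q \<in> R i" for q i using that unfolding R_def by auto
  have finQ: "finite Q" using Q pairs_finite finite_subset unfolding n_def[symmetric] by blast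
  have QR: "Q \<inter> (\<Union>i\<in>{1..m}. R i) = {}"
  proof -
    { fix q i assume "q \<in> Q" "q \<in> R i"
      then have False using Qform Rform by fastforce }
    then show ?thesis by blast
  qed
  have cardP: "card P = card Q + (\<Sum>i=1..m. nu (a i) Q)"
    unfolding P_def using card_Un_disjoint[OF finQ _ QR] finR cardU by simp
  have PC: "P \<inter> pairs (Cset n) (Sset n) = Q"
  proof -
    { fix q i assume "q \<in> pairs (Cset n) (Sset n)" "q \<in> R i"
      then have False using pform Rform by fastforce }
    then show ?thesis unfolding P_def using Q n_def by blast
  qed
  define HV where "HV = HY_vertices m a"
  define HE where "HE = HY_edges m a"
  have finHV: "finite HV" unfolding HV_def HY_vertices_def Rset_def Cset_def Sset_def by simp
  have cov: "is_2cover HV HE P"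
    unfolding is_2cover_def
  proof (rule conjI; intro ballI)
    fix p assume "p \<in> P"
    then consider "p \<in> Q" | i where "i \<in> {1..m}" "p \<in> R i" unfolding P_def by blast
    then show "p \<subseteq> HV \<and> card p = 2"
    proof cases
      case 1
      then obtain j k where "p = {Cv j, Sv k}" "j \<in> {1..n}" "k \<in> {1..n}" using Qform by blast
      then show ?thesis unfolding HV_def HY_vertices_def n_def[symmetric] Cset_def Sset_def by auto
    next
      case 2
      then obtain x where x: "x \<in> V i" "p = {Rv i, x}" unfolding R_def by blast
      have "a i \<le> n" using an 2 by auto
      then have "x \<in> Cset n \<union> Sset n" using V(1)[of i] x(1) by (auto simp: Cset_def Sset_def)
      moreover have "Rv i \<in> Rset m" using 2 by (simp add: Rset_def)
      moreover have "x \<noteq> Rv i" using VnoR x(1) by blast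
      ultimately show ?thesis using x unfolding HV_def HY_vertices_def n_def[symmetric] by auto
    qed
  next
    fix e assume "e \<in> HE"
    then obtain i j k where e: "e = {Rv i, Cv j, Sv k}" "1 \<le> i" "i \<le> m" "1 \<le> j" "j \<le> a i" "1 \<le> k" "k \<le> a i"
      unfolding HE_def HY_edges_def by blast
    show "\<exists>p\<in>P. p \<subseteq> e"
    proof (cases "{Cv j, Sv k} \<in> Q")
      case True then show ?thesis unfolding P_def using e(1) by auto
    next
      case False
      then have "Cv j \<in> V i \<or> Sv k \<in> V i" using V(3)[of i] e by auto
      then show ?thesis
      proof
        assume "Cv j \<in> V i"
        then have "{Rv i, Cv j} \<in> P" unfolding P_def R_def using e by auto
        moreover have "{Rv i, Cv j} \<subseteq> e" using e(1) by auto
        ultimately show ?thesis by blast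
      next
        assume "Sv k \<in> V i"
        then have "{Rv i, Sv k} \<in> P" unfolding P_def R_def using e by auto
        moreover have "{Rv i, Sv k} \<subseteq> e" using e(1) by auto
        ultimately show ?thesis by blast
      qed
    qed
  qed
  have "tau2 HV HE \<le> card P"
  proof -
    have "{card P | P. is_2cover HV HE P} \<subseteq> card ` Pow (Pow HV)"
      unfolding is_2cover_def by auto
    then have "finite {card P | P. is_2cover HV HE P}" using finHV finite_subset by blast
    then show ?thesis unfolding tau2_def using cov by (intro Min_le) auto
  qed
  then show ?thesis using cov PC cardP unfolding HV_def HE_def n_def by blast
qed

end
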